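(* Let $k,\ell$ be positive integers. Then, as formal power series in $t$, \[ \sum_{c\ge0}\big(\operatorname{re}_k(\ell,c)-\operatorname{ro}_k(\ell,c)\big)\frac{t^{c}}{c!}=\exp\Big(\sum_{g\in G_k(\ell)}(-1)^{\ell g+1}\frac{\ell^{g-1}}{g}t^{g}\Big). \]
   Context: $G_k(\ell)=\{g\in\mathbb N:\gcd(g\ell,k)=g\}$. A permutation of cycle type $(\ell)^c$ is a permutation of an $\ell c$-element set whose disjoint cycle decomposition consists of exactly $c$ cycles, all of length $\ell$ (for $c=0$ it is the empty permutation). $\operatorname{re}_k(\ell,c)$ (resp. $\operatorname{ro}_k(\ell,c)$) denotes the number of even (resp. odd) permutations $\tau$ of the same $\ell c$-element set with $\tau^k=\sigma$, where $\sigma$ is any fixed permutation of cycle type $(\ell)^c$ (this number does not depend on the choice of $\sigma$). *)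

theory Defs
  imports "HOL-Combinatorics.Combinatorics" "HOL-Computational_Algebra.Formal_Power_Series"
begin

definition G_set :: "nat \<Rightarrow> nat \<Rightarrow> nat set" where
  "G_set k l = {g. gcd (g * l) k = g}"

definition has_cycle_type :: "nat \<Rightarrow> nat \<Rightarrow> 'a set \<Rightarrow> ('a \<Rightarrow> 'a) \<Rightarrow> bool" where
  "has_cycle_type l c S \<sigma> \<longleftrightarrow> \<sigma> permutes S \<and> finite S \<and> card S = l * c \<and>
     (\<forall>x\<in>S. card (orbit \<sigma> x) = l)"

definition re_roots :: "nat \<Rightarrow> 'a set \<Rightarrow> ('a \<Rightarrow> 'a) \<Rightarrow> nat" where
  "re_roots k S \<sigma> = card {\<tau>. \<tau> permutes S \<and> \<tau> ^^ k = \<sigma> \<and> evenperm \<tau>}"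

definition ro_roots :: "nat \<Rightarrow> 'a set \<Rightarrow> ('a \<Rightarrow> 'a) \<Rightarrow> nat" where
  "ro_roots k S \<sigma> = card {\<tau>. \<tau> permutes S \<and> \<tau> ^^ k = \<sigma> \<and> \<not> evenperm \<tau>}"

end

theory Submission
  imports Defs
begin


section \<open>Cycle lists\<close>

lemma sign_cycle_of_list:
  "distinct cs \<Longrightarrow> sign (cycle_of_list cs) = (-1) ^ (length cs - 1)"
proof (induction cs rule: cycle_of_list.induct)
  case (1 i j cs)
  have "sign (cycle_of_list (i # j # cs)) = sign (transpose i j) * sign (cycle_of_list (j # cs))"
    unfolding cycle_of_list.simps(1) by (rule sign_compose[OF permutation_swap_id permutation_of_cycle])
  also have "\<dots> = (-1)^(length (i#j#cs) - 1)" using 1 by (simp add: sign_swap_id)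
  finally show ?case .
qed (auto simp: sign_id)

lemma cycle_of_list_pow_nth:
  assumes "distinct cs" "i < length cs"
  shows "(cycle_of_list cs ^^ n) (cs ! i) = cs ! ((i + n) mod length cs)"
proof -
  have "map (cycle_of_list cs ^^ n) cs ! i = rotate n cs ! i"
    using cyclic_rotation[OF assms(1)] by simp
  then show ?thesis using assms(2) by (simp add: nth_rotate add.commute)
qed

section \<open>Regular permutations\<close>

definition creg :: "nat \<Rightarrow> 'a set \<Rightarrow> ('a \<Rightarrow> 'a) \<Rightarrow> bool" where
  "creg l S \<sigma> \<longleftrightarrow> \<sigma> permutes S \<and> finite S \<and> (\<forall>x\<in>S. card (orbit \<sigma> x) = l)"

lemma creg_perm: "creg l S \<sigma> \<Longrightarrow> permutation \<sigma>"
  unfolding creg_def permutation_permutes by (intro exI[of _ S]) simp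

lemma creg_self_in: "creg l S \<sigma> \<Longrightarrow> x \<in> orbit \<sigma> x"
  by (rule permutation_self_in_orbit[OF creg_perm])

lemma creg_period:
  assumes "creg l S \<sigma>" "x \<in> S"
  shows "(\<sigma> ^^ l) x = x"
proof -
  have xo: "x \<in> orbit \<sigma> x" using creg_self_in[OF assms(1)] .
  have "card (orbit \<sigma> x) = card ((\<lambda>n. (\<sigma> ^^ n) x) ` {0..<funpow_dist1 \<sigma> x x})"
    using orbit_conv_funpow_dist1[OF xo] by simp
  also have "\<dots> = funpow_dist1 \<sigma> x x"
    using card_image[OF inj_on_funpow_dist1[OF xo]] by simp
  finally have c: "card (orbit \<sigma> x) = funpow_dist1 \<sigma> x x" .
  have "card (orbit \<sigma> x) = l" using assms(1,2) unfolding creg_def by blast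
  then have "funpow_dist1 \<sigma> x x = l" using c by simp
  then show ?thesis using funpow_dist1_prop[OF xo] by simp
qed

lemma creg_mod:
  assumes "creg l S \<sigma>" "x \<in> S"
  shows "(\<sigma> ^^ n) x = (\<sigma> ^^ (n mod l)) x"
  using funpow_mod_eq[where f=\<sigma> and n=l and x=x and m=n] creg_period[OF assms] by simp

lemma creg_inj:
  assumes "creg l S \<sigma>" "x \<in> S" "a < l" "b < l" "(\<sigma> ^^ a) x = (\<sigma> ^^ b) x"
  shows "a = b"
proof -
  have xo: "x \<in> orbit \<sigma> x" using creg_self_in[OF assms(1)] .
  have "card (orbit \<sigma> x) = card ((\<lambda>n. (\<sigma> ^^ n) x) ` {0..<funpow_dist1 \<sigma> x x})"
    using orbit_conv_funpow_dist1[OF xo] by simp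
  also have "\<dots> = funpow_dist1 \<sigma> x x"
    using card_image[OF inj_on_funpow_dist1[OF xo]] by simp
  finally have c: "card (orbit \<sigma> x) = funpow_dist1 \<sigma> x x" .
  have "card (orbit \<sigma> x) = l" using assms(1,2) unfolding creg_def by blast
  then have "funpow_dist1 \<sigma> x x = l" using c by simp
  then show ?thesis using funpow_neq_less_funpow_dist1[OF xo, where m=a and n=b] assms by auto
qed

lemma creg_eq_iff:
  assumes "creg l S \<sigma>" "x \<in> S" "l > 0"
  shows "(\<sigma> ^^ a) x = (\<sigma> ^^ b) x \<longleftrightarrow> a mod l = b mod l"
proof -
  have ea: "(\<sigma> ^^ a) x = (\<sigma> ^^ (a mod l)) x" by (rule creg_mod[OF assms(1,2)])
  have eb: "(\<sigma> ^^ b) x = (\<sigma> ^^ (b mod l)) x" by (rule creg_mod[OF assms(1,2)])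
  have "(\<sigma> ^^ (a mod l)) x = (\<sigma> ^^ (b mod l)) x \<longleftrightarrow> a mod l = b mod l"
    using creg_inj[OF assms(1,2), of "a mod l" "b mod l"] assms(3) by auto
  then show ?thesis using ea eb by simp
qed

lemma creg_orbit:
  assumes "creg l S \<sigma>"
  shows "orbit \<sigma> x = {(\<sigma> ^^ n) x | n. True}"
  using orbit_altdef_permutation[OF creg_perm[OF assms]] .

lemma creg_orbit_sub:
  assumes "creg l S \<sigma>" "x \<in> S" shows "orbit \<sigma> x \<subseteq> S"
  using assms(2) permutes_orbit_subset[of \<sigma> S x] assms(1) unfolding creg_def by simp

lemma creg_orbit_same:
  assumes "creg l S \<sigma>" "z \<in> orbit \<sigma> x" shows "orbit \<sigma> z = orbit \<sigma> x"
  using orbit_cyclic_eq3[OF cyclic_on_orbit'[OF creg_perm[OF assms(1)]] assms(2)] .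

lemma creg_orbit_disj:
  assumes "creg l S \<sigma>" "orbit \<sigma> x \<noteq> orbit \<sigma> y" shows "orbit \<sigma> x \<inter> orbit \<sigma> y = {}"
proof (rule ccontr)
  assume "orbit \<sigma> x \<inter> orbit \<sigma> y \<noteq> {}"
  then obtain w where "w \<in> orbit \<sigma> x" "w \<in> orbit \<sigma> y" by blast
  then have "orbit \<sigma> w = orbit \<sigma> x" "orbit \<sigma> w = orbit \<sigma> y"
    using creg_orbit_same[OF assms(1), of w x] creg_orbit_same[OF assms(1), of w y] by auto
  then show False using assms(2) by simp
qed

lemma creg_funpow_orbit:
  assumes "creg l S \<sigma>" shows "orbit \<sigma> ((\<sigma> ^^ n) x) = orbit \<sigma> x"
  using creg_orbit_same[OF assms funpow_in_orbit[OF creg_self_in[OF assms]]] .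

lemma creg_in_S:
  assumes "creg l S \<sigma>" "x \<in> S" shows "(\<sigma> ^^ n) x \<in> S"
  using assms unfolding creg_def by (induct n) (auto simp: permutes_in_image)




definition Cset :: "('a \<Rightarrow> 'a) \<Rightarrow> 'a list \<Rightarrow> 'a set" where
  "Cset \<sigma> ys = (\<Union>y\<in>set ys. orbit \<sigma> y)"
definition uinv :: "nat \<Rightarrow> nat \<Rightarrow> nat \<Rightarrow> nat" where
  "uinv k l g = (SOME u. (k div g * u) mod l = 1 mod l)"
definition enum :: "nat \<Rightarrow> nat \<Rightarrow> ('a \<Rightarrow> 'a) \<Rightarrow> 'a list \<Rightarrow> nat \<Rightarrow> 'a" where
  "enum k l \<sigma> ys i = (\<sigma> ^^ ((i div length ys) * uinv k l (length ys) mod l)) (ys ! (i mod length ys))"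
definition elist :: "nat \<Rightarrow> nat \<Rightarrow> ('a \<Rightarrow> 'a) \<Rightarrow> 'a list \<Rightarrow> 'a list" where
  "elist k l \<sigma> ys = map (enum k l \<sigma> ys) [0..<l * length ys]"
definition rho :: "nat \<Rightarrow> nat \<Rightarrow> ('a \<Rightarrow> 'a) \<Rightarrow> 'a list \<Rightarrow> 'a \<Rightarrow> 'a" where
  "rho k l \<sigma> ys = cycle_of_list (elist k l \<sigma> ys)"
definition Seqs :: "'a set \<Rightarrow> ('a \<Rightarrow> 'a) \<Rightarrow> 'a \<Rightarrow> 'a list set" where
  "Seqs S \<sigma> x0 = {ys. ys \<noteq> [] \<and> hd ys = x0 \<and> set ys \<subseteq> S \<and> distinct (map (orbit \<sigma>) ys)}"
definition roots :: "nat \<Rightarrow> 'a set \<Rightarrow> ('a \<Rightarrow> 'a) \<Rightarrow> ('a \<Rightarrow> 'a) set" where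
  "roots k S \<sigma> = {\<tau>. \<tau> permutes S \<and> \<tau> ^^ k = \<sigma>}"

lemma G_facts:
  assumes "g \<in> G_set k l" "k > 0"
  shows "g > 0" "g dvd k" "coprime (k div g) l"
proof -
  have e: "gcd (g * l) k = g" using assms(1) unfolding G_set_def by simp
  show "g > 0" using e assms(2) by (cases g) auto
  show "g dvd k" using e by (metis gcd_dvd2)
  then obtain k' where k': "k = g * k'" by blast
  have "gcd (g * l) (g * k') = g * gcd l k'" by (simp add: gcd_mult_distrib_nat)
  then have "gcd l k' = 1" using e k' \<open>g > 0\<close> by simp
  then show "coprime (k div g) l" using k' \<open>g > 0\<close> by (simp add: coprime_iff_gcd_eq_1 gcd.commute)
qed

lemma uinv_prop:
  assumes "g \<in> G_set k l" "k > 0"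
  shows "(k div g * uinv k l g) mod l = 1 mod l"
proof -
  have gp: "g > 0" "g dvd k" and cp: "coprime (k div g) l" using G_facts[OF assms] by auto
  have "k div g \<noteq> 0" using gp assms(2) by (auto elim!: dvdE)
  then obtain x y where "k div g * x = l * y + gcd (k div g) l" using bezout_nat by blast
  then have "k div g * x = l * y + 1" using cp by simp
  then have "(k div g * x) mod l = (1 + l * y) mod l" by simp
  also have "\<dots> = 1 mod l" by (rule mod_mult_self2)
  finally have "(k div g * x) mod l = 1 mod l" .
  then show ?thesis unfolding uinv_def by (rule someI)
qed

lemma G_iff:
  assumes "k > 0" "g > 0" "g dvd k" "(k div g * v) mod l = 1 mod l"
  shows "g \<in> G_set k l"
proof -
  obtain k' where k': "k = g * k'" using assms by blast
  have "coprime k' l"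
  proof (rule coprimeI)
    fix d assume "d dvd k'" "d dvd l"
    then have "d dvd (k' * v) mod l" by (simp add: dvd_mod)
    moreover have "(k' * v) mod l = 1 mod l" using assms(4) k' assms(2) by simp
    ultimately have "d dvd 1 mod l" by simp
    then show "is_unit d" using \<open>d dvd l\<close>
      by (metis dvd_mod_iff mod_mod_trivial)
  qed
  then have "gcd l k' = 1" by (simp add: coprime_iff_gcd_eq_1 gcd.commute)
  then have "gcd (g * l) k = g" using k' gcd_mult_distrib_nat[of g l k'] by simp
  then show ?thesis unfolding G_set_def by simp
qed

lemma mod_mult2_parts:
  fixes n g l :: nat
  assumes "g > 0"
  shows "(n mod (g * l)) mod g = n mod g" "(n mod (g * l)) div g = (n div g) mod l"
proof -
  have eq: "n mod (g * l) = g * ((n div g) mod l) + n mod g" by (simp add: mod_mult2_eq)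
  show "(n mod (g * l)) mod g = n mod g" unfolding eq by simp
  show "(n mod (g * l)) div g = (n div g) mod l" unfolding eq using assms by simp
qed

lemma funpow_commute_gen:
  assumes "f \<circ> g = g \<circ> f"
  shows "(f ^^ a) ((g ^^ b) z) = (g ^^ b) ((f ^^ a) z)"
proof -
  have 1: "f \<circ> g ^^ b = g ^^ b \<circ> f" for b
  proof (induction b)
    case (Suc b)
    have "f \<circ> g ^^ Suc b = (f \<circ> g ^^ b) \<circ> g" by (simp only: funpow_Suc_right comp_assoc)
    also have "\<dots> = g ^^ b \<circ> (f \<circ> g)" by (metis Suc.IH comp_assoc)
    also have "\<dots> = g ^^ b \<circ> (g \<circ> f)" by (simp only: assms)
    also have "\<dots> = g ^^ Suc b \<circ> f" by (simp only: funpow_Suc_right comp_assoc)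
    finally show ?case .
  qed simp
  have "f ^^ a \<circ> g ^^ b = g ^^ b \<circ> f ^^ a"
  proof (induction a)
    case (Suc a)
    have "f ^^ Suc a \<circ> g ^^ b = f \<circ> (f ^^ a \<circ> g ^^ b)" by (simp add: comp_assoc)
    also have "\<dots> = f \<circ> (g ^^ b \<circ> f ^^ a)" by (simp only: Suc.IH)
    also have "\<dots> = (f \<circ> g ^^ b) \<circ> f ^^ a" by (simp only: comp_assoc)
    also have "\<dots> = (g ^^ b \<circ> f) \<circ> f ^^ a" by (simp only: 1)
    also have "\<dots> = g ^^ b \<circ> f ^^ Suc a" by (simp only: comp_assoc funpow.simps(2))
    finally show ?case .
  qed simp
  then show ?thesis by (metis comp_apply)
qed

lemma funpow_comp_commute:
  assumes "f \<circ> g = g \<circ> f"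
  shows "(f \<circ> g) ^^ n = f ^^ n \<circ> g ^^ n"
proof -
  have "((f \<circ> g) ^^ n) z = (f ^^ n) ((g ^^ n) z)" for z
  proof (induction n)
    case (Suc n)
    have c: "g ((f ^^ n) w) = (f ^^ n) (g w)" for w
      using funpow_commute_gen[OF assms, of n 1 w] by simp
    have "((f \<circ> g) ^^ Suc n) z = f (g ((f ^^ n) ((g ^^ n) z)))"
      by (simp only: funpow.simps(2) comp_apply Suc.IH)
    also have "\<dots> = f ((f ^^ n) (g ((g ^^ n) z)))" using c by simp
    also have "\<dots> = (f ^^ Suc n) ((g ^^ Suc n) z)" by simp
    finally show ?case .
  qed simp
  then show ?thesis by (simp add: fun_eq_iff)
qed

lemma restrict_permutes:
  assumes "f permutes S" "A \<subseteq> S" "f ` A = A"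
  shows "perm_restrict f (S - A) permutes (S - A)"
    "\<And>z n. z \<in> S - A \<Longrightarrow> (perm_restrict f (S - A) ^^ n) z = (f ^^ n) z"
    "\<And>z. z \<in> S - A \<Longrightarrow> f z \<in> S - A"
proof -
  have inj: "inj f" using assms(1) permutes_inj by blast
  have "f ` (S - A) = f ` S - f ` A" using inj by (simp add: image_set_diff)
  then have im: "f ` (S - A) = S - A" using assms permutes_image by metis
  then show sd: "\<And>z. z \<in> S - A \<Longrightarrow> f z \<in> S - A" by blast
  show "perm_restrict f (S - A) permutes (S - A)"
  proof (rule bij_imp_permutes)
    have "bij_betw f (S - A) (S - A)" unfolding bij_betw_def using im inj_on_subset[OF inj, of "S - A"] by simp
    then show "bij_betw (perm_restrict f (S - A)) (S - A) (S - A)"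
      by (rule bij_betw_cong[THEN iffD1, rotated]) (simp add: perm_restrict_def)
  qed (auto simp: perm_restrict_def)
  fix z n assume "z \<in> S - A"
  then show "(perm_restrict f (S - A) ^^ n) z = (f ^^ n) z"
  proof (induction n)
    case (Suc n)
    have "(f ^^ n) z \<in> S - A" using Suc.prems sd by (induction n) auto
    then show ?case using Suc by (simp add: perm_restrict_def)
  qed simp
qed

lemma modinv_unique:
  fixes q u v l :: nat
  assumes "(q * u) mod l = 1 mod l" "(q * v) mod l = 1 mod l"
  shows "u mod l = v mod l"
proof -
  have "(u * (q * v)) mod l = (u * ((q * v) mod l)) mod l" by (simp add: mod_mult_right_eq)
  also have "\<dots> = u mod l" using assms(2) by (simp add: mod_mult_right_eq)
  finally have 1: "(u * (q * v)) mod l = u mod l" .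
  have "((q * u) * v) mod l = (((q * u) mod l) * v) mod l" by (simp add: mod_mult_left_eq)
  also have "\<dots> = v mod l" using assms(1) by (simp add: mod_mult_left_eq)
  finally have 2: "((q * u) * v) mod l = v mod l" .
  show ?thesis using 1 2 by (simp add: algebra_simps)
qed

definition gt :: "('a \<Rightarrow> 'a) \<Rightarrow> 'a \<Rightarrow> ('a \<Rightarrow> 'a) \<Rightarrow> nat" where
  "gt \<sigma> x0 \<tau> = (LEAST g. 0 < g \<and> (\<tau> ^^ g) x0 \<in> orbit \<sigma> x0)"
definition ysof :: "('a \<Rightarrow> 'a) \<Rightarrow> 'a \<Rightarrow> ('a \<Rightarrow> 'a) \<Rightarrow> 'a list" where
  "ysof \<sigma> x0 \<tau> = map (\<lambda>r. (\<tau> ^^ r) x0) [0..<gt \<sigma> x0 \<tau>]"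




context
  fixes k l :: nat and S :: "'a set" and \<sigma> :: "'a \<Rightarrow> 'a" and x0 :: 'a
  assumes kpos: "k > 0" and lpos: "l > 0" and cr: "creg l S \<sigma>" and x0S: "x0 \<in> S"
begin

lemma Seqs_facts:
  assumes "ys \<in> Seqs S \<sigma> x0"
  shows "distinct ys" "set ys \<subseteq> S" "ys ! 0 = x0" "length ys > 0"
    "\<And>i j. i < length ys \<Longrightarrow> j < length ys \<Longrightarrow> orbit \<sigma> (ys ! i) = orbit \<sigma> (ys ! j) \<Longrightarrow> i = j"
proof -
  have d: "distinct (map (orbit \<sigma>) ys)" and ne: "ys \<noteq> []" and h: "hd ys = x0" and s: "set ys \<subseteq> S"
    using assms unfolding Seqs_def by auto
  show "distinct ys" using d by (simp add: distinct_map)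
  show "set ys \<subseteq> S" by fact
  show "ys ! 0 = x0" using ne h by (simp add: hd_conv_nth)
  show "length ys > 0" using ne by simp
  fix i j assume "i < length ys" "j < length ys" "orbit \<sigma> (ys ! i) = orbit \<sigma> (ys ! j)"
  then show "i = j" using d[unfolded distinct_conv_nth] by (metis length_map nth_map)
qed

lemma Cset_facts:
  assumes "ys \<in> Seqs S \<sigma> x0"
  shows "Cset \<sigma> ys \<subseteq> S" "finite (Cset \<sigma> ys)" "card (Cset \<sigma> ys) = l * length ys"
proof -
  have s: "set ys \<subseteq> S" and d: "distinct ys" using Seqs_facts[OF assms] by auto
  have d2: "distinct (map (orbit \<sigma>) ys)" using assms unfolding Seqs_def by auto
  show "Cset \<sigma> ys \<subseteq> S" unfolding Cset_def using s creg_orbit_sub[OF cr] by blast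
  then show "finite (Cset \<sigma> ys)" using cr unfolding creg_def by (meson finite_subset)
  have "card (Cset \<sigma> ys) = (\<Sum>y\<in>set ys. card (orbit \<sigma> y))" unfolding Cset_def
  proof (rule card_UN_disjoint)
    show "\<forall>i\<in>set ys. finite (orbit \<sigma> i)"
      using s creg_orbit_sub[OF cr] cr unfolding creg_def by (meson finite_subset subsetD)
    show "\<forall>i\<in>set ys. \<forall>j\<in>set ys. i \<noteq> j \<longrightarrow> orbit \<sigma> i \<inter> orbit \<sigma> j = {}"
    proof (intro ballI impI)
      fix i j assume "i \<in> set ys" "j \<in> set ys" "i \<noteq> j"
      then have "orbit \<sigma> i \<noteq> orbit \<sigma> j" using d2 by (auto simp: distinct_map inj_on_def)
      then show "orbit \<sigma> i \<inter> orbit \<sigma> j = {}" using creg_orbit_disj[OF cr] by blast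
    qed
  qed simp
  also have "\<dots> = (\<Sum>y\<in>set ys. l)" using s cr unfolding creg_def by (intro sum.cong) auto
  also have "\<dots> = l * length ys" using d by (simp add: distinct_card)
  finally show "card (Cset \<sigma> ys) = l * length ys" .
qed

lemma Cset_sigma:
  assumes "z \<in> Cset \<sigma> ys" shows "(\<sigma> ^^ n) z \<in> Cset \<sigma> ys"
  using assms unfolding Cset_def using funpow_in_orbit by fast

lemma Cset_elem:
  assumes "z \<in> Cset \<sigma> ys" obtains i where "i < length ys" "z \<in> orbit \<sigma> (ys ! i)"
  using assms unfolding Cset_def by (metis UN_E in_set_conv_nth)

context
  fixes ys assumes ys: "ys \<in> Seqs S \<sigma> x0" and gG: "length ys \<in> G_set k l"
begin

abbreviation "gL \<equiv> length ys"
abbreviation "uL \<equiv> uinv k l (length ys)"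

lemma gpos: "gL > 0" using G_facts(1)[OF gG kpos] .
lemma gdvd: "gL dvd k" using G_facts(2)[OF gG kpos] .
lemma uprop: "(k div gL * uL) mod l = 1 mod l" using uinv_prop[OF gG kpos] .

lemma ysS: "i < gL \<Longrightarrow> ys ! i \<in> S" using Seqs_facts(2)[OF ys] by auto

lemma enum_orbit: "orbit \<sigma> (enum k l \<sigma> ys i) = orbit \<sigma> (ys ! (i mod gL))"
  unfolding enum_def by (rule creg_funpow_orbit[OF cr])

lemma enum_in: "enum k l \<sigma> ys i \<in> Cset \<sigma> ys"
proof -
  have "i mod gL < gL" using gpos by simp
  then have "ys ! (i mod gL) \<in> set ys" by simp
  then show ?thesis unfolding Cset_def enum_def
    using funpow_in_orbit[OF creg_self_in[OF cr]] by blast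
qed

lemma enum_small: "i < gL \<Longrightarrow> enum k l \<sigma> ys i = ys ! i"
  unfolding enum_def by simp

lemma enum_mod: "enum k l \<sigma> ys (i mod (l * gL)) = enum k l \<sigma> ys i"
proof -
  have im: "i mod gL < gL" using gpos by simp
  have a: "(i mod (gL * l)) mod gL = i mod gL" "(i mod (gL * l)) div gL = (i div gL) mod l"
    using mod_mult2_parts[OF gpos] by auto
  have "((i div gL) mod l * uL) mod l = (i div gL * uL) mod l" by (simp add: mod_mult_left_eq)
  then show ?thesis unfolding enum_def using a by (simp add: mult.commute)
qed

lemma enum_step: "\<sigma> (enum k l \<sigma> ys i) = enum k l \<sigma> ys (i + k)"
proof -
  obtain k' where k': "k = gL * k'" using gdvd by blast
  have im: "i mod gL < gL" using gpos by simp
  have yS: "ys ! (i mod gL) \<in> S" using ysS[OF im] .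
  have d: "(i + k) div gL = i div gL + k'" "(i + k) mod gL = i mod gL" using gpos k' by auto
  have u1: "(k' * uL) mod l = 1 mod l" using uprop k' gpos by simp
  have "((i div gL + k') * uL) mod l = ((i div gL * uL) mod l + (k' * uL) mod l) mod l"
    by (simp add: algebra_simps mod_add_eq)
  also have "\<dots> = Suc (i div gL * uL mod l) mod l" using u1 by (simp add: mod_Suc_eq mod_add_right_eq)
  finally have e: "((i div gL + k') * uL) mod l = Suc (i div gL * uL mod l) mod l" .
  have "\<sigma> (enum k l \<sigma> ys i) = (\<sigma> ^^ Suc (i div gL * uL mod l)) (ys ! (i mod gL))"
    unfolding enum_def by simp
  also have "\<dots> = (\<sigma> ^^ (Suc (i div gL * uL mod l) mod l)) (ys ! (i mod gL))"
    by (rule creg_mod[OF cr yS])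
  also have "\<dots> = (\<sigma> ^^ (((i div gL + k') * uL) mod l)) (ys ! (i mod gL))"
    by (simp only: e)
  also have "\<dots> = enum k l \<sigma> ys (i + k)" unfolding enum_def d ..
  finally show ?thesis .
qed

lemma enum_inj:
  assumes "i < l * gL" "j < l * gL" "enum k l \<sigma> ys i = enum k l \<sigma> ys j"
  shows "i = j"
proof -
  obtain k' where k': "k = gL * k'" using gdvd by blast
  have u1: "(k' * uL) mod l = 1 mod l" using uprop k' gpos by simp
  have im: "i mod gL < gL" "j mod gL < gL" using gpos by auto
  have "orbit \<sigma> (ys ! (i mod gL)) = orbit \<sigma> (ys ! (j mod gL))"
    using enum_orbit[of i] enum_orbit[of j] assms(3) by simp
  then have mg: "i mod gL = j mod gL" using Seqs_facts(5)[OF ys im] by simp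
  have yS: "ys ! (i mod gL) \<in> S" using ysS[OF im(1)] .
  have "(i div gL * uL mod l) mod l = (j div gL * uL mod l) mod l"
    using assms(3) unfolding enum_def mg creg_eq_iff[OF cr ysS[OF im(2)] lpos] .
  then have "(i div gL * uL) mod l = (j div gL * uL) mod l" by simp
  then have "(i div gL * uL * k') mod l = (j div gL * uL * k') mod l" by (metis mod_mult_left_eq)
  moreover have "\<And>a. (a * uL * k') mod l = a mod l"
    by (metis u1 mod_mult_right_eq mult.assoc mult.commute nat_mult_1_right)
  ultimately have "(i div gL) mod l = (j div gL) mod l" by metis
  moreover have "i div gL < l" "j div gL < l" using assms gpos
    by (auto simp: less_mult_imp_div_less mult.commute)
  ultimately have "i div gL = j div gL" by simp
  then show ?thesis using mg by (metis div_mult_mod_eq)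
qed


abbreviation "mL \<equiv> l * length ys"

lemma elist_len: "length (elist k l \<sigma> ys) = mL" unfolding elist_def by simp
lemma elist_nth: "i < mL \<Longrightarrow> elist k l \<sigma> ys ! i = enum k l \<sigma> ys i" unfolding elist_def by simp

lemma elist_distinct: "distinct (elist k l \<sigma> ys)"
  unfolding elist_def distinct_map using enum_inj by (auto simp: inj_on_def)

lemma elist_set: "set (elist k l \<sigma> ys) = Cset \<sigma> ys"
proof -
  have sub: "set (elist k l \<sigma> ys) \<subseteq> Cset \<sigma> ys" unfolding elist_def using enum_in by auto
  have "card (set (elist k l \<sigma> ys)) = mL" using distinct_card[OF elist_distinct] elist_len by simp
  then show ?thesis using card_subset_eq[OF Cset_facts(2)[OF ys] sub] Cset_facts(3)[OF ys] by simp
qed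

lemma Cset_enum: assumes "z \<in> Cset \<sigma> ys" obtains i where "i < mL" "z = enum k l \<sigma> ys i"
proof -
  from assms have "z \<in> set (elist k l \<sigma> ys)" using elist_set by simp
  then obtain i where "i < mL" "z = elist k l \<sigma> ys ! i" using elist_len by (metis in_set_conv_nth)
  then show ?thesis using that elist_nth by simp
qed

lemma mpos: "mL > 0" using lpos gpos by simp

lemma rho_pow_enum: "(rho k l \<sigma> ys ^^ n) (enum k l \<sigma> ys i) = enum k l \<sigma> ys (i + n)"
proof -
  have im: "i mod mL < mL" using mpos by simp
  have "(rho k l \<sigma> ys ^^ n) (enum k l \<sigma> ys i) = (rho k l \<sigma> ys ^^ n) (elist k l \<sigma> ys ! (i mod mL))"
    using enum_mod[of i] elist_nth[OF im] by simp
  also have "\<dots> = elist k l \<sigma> ys ! ((i mod mL + n) mod mL)"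
    unfolding rho_def using cycle_of_list_pow_nth[OF elist_distinct, of "i mod mL" n] elist_len im by simp
  also have "\<dots> = enum k l \<sigma> ys ((i mod mL + n) mod mL)" using elist_nth mpos by simp
  also have "\<dots> = enum k l \<sigma> ys (i + n)" using enum_mod[of "i + n"] by (simp add: mod_add_left_eq)
  finally show ?thesis .
qed

lemma rho_permutes: "rho k l \<sigma> ys permutes Cset \<sigma> ys"
  unfolding rho_def using cycle_permutes[of "elist k l \<sigma> ys"] elist_set by simp

lemma rho_out: "z \<notin> Cset \<sigma> ys \<Longrightarrow> (rho k l \<sigma> ys ^^ n) z = z"
  using permutes_not_in[OF permutes_funpow[OF rho_permutes]] by blast

lemma rho_k: "z \<in> Cset \<sigma> ys \<Longrightarrow> (rho k l \<sigma> ys ^^ k) z = \<sigma> z"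
  by (metis Cset_enum rho_pow_enum enum_step)

lemma rho_sign: "sign (rho k l \<sigma> ys) = (-1) ^ (mL - 1)"
  unfolding rho_def using sign_cycle_of_list[OF elist_distinct] elist_len by simp

lemma x0_enum: "enum k l \<sigma> ys 0 = x0"
  using enum_small[of 0] gpos Seqs_facts(3)[OF ys] by simp

lemma rho_x0: "r < gL \<Longrightarrow> (rho k l \<sigma> ys ^^ r) x0 = ys ! r"
  using rho_pow_enum[of r 0] x0_enum enum_small[of r] by simp

lemma rho_x0_g: "(rho k l \<sigma> ys ^^ gL) x0 \<in> orbit \<sigma> x0"
proof -
  have "(rho k l \<sigma> ys ^^ gL) x0 = enum k l \<sigma> ys gL" using rho_pow_enum[of gL 0] x0_enum by simp
  also have "\<dots> \<in> orbit \<sigma> (ys ! 0)" unfolding enum_def using gpos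
    by (simp add: funpow_in_orbit creg_self_in[OF cr])
  finally show ?thesis using Seqs_facts(3)[OF ys] by simp
qed

lemma Cset_sigma_inv: "z \<in> S \<Longrightarrow> \<sigma> z \<in> Cset \<sigma> ys \<longleftrightarrow> z \<in> Cset \<sigma> ys"
proof
  assume "z \<in> Cset \<sigma> ys" then show "\<sigma> z \<in> Cset \<sigma> ys" using Cset_sigma[of z ys 1] by simp
next
  assume "\<sigma> z \<in> Cset \<sigma> ys"
  then obtain i where "i < gL" "\<sigma> z \<in> orbit \<sigma> (ys ! i)" by (rule Cset_elem)
  moreover have "orbit \<sigma> (\<sigma> z) = orbit \<sigma> z" using creg_funpow_orbit[OF cr, of 1 z] by simp
  ultimately have "z \<in> orbit \<sigma> (ys ! i)" using creg_orbit_same[OF cr] creg_self_in[OF cr] by metis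
  then show "z \<in> Cset \<sigma> ys" unfolding Cset_def using \<open>i < gL\<close> by auto
qed

lemma sigma_Cset_img: "\<sigma> ` Cset \<sigma> ys = Cset \<sigma> ys"
proof -
  have "\<sigma> ` Cset \<sigma> ys \<subseteq> Cset \<sigma> ys" using Cset_sigma[of _ ys 1] by auto
  moreover have "card (\<sigma> ` Cset \<sigma> ys) = card (Cset \<sigma> ys)"
    using card_image permutes_inj cr unfolding creg_def by (metis inj_on_subset subset_UNIV)
  ultimately show ?thesis using card_subset_eq[OF Cset_facts(2)[OF ys]] by blast
qed

lemma x0_C: "x0 \<in> Cset \<sigma> ys"
  using enum_in[of 0] x0_enum by simp

context
  fixes \<tau>' assumes t'r: "\<tau>' \<in> roots k (S - Cset \<sigma> ys) (perm_restrict \<sigma> (S - Cset \<sigma> ys))"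
begin

lemma t'perm: "\<tau>' permutes (S - Cset \<sigma> ys)" and t'k: "\<tau>' ^^ k = perm_restrict \<sigma> (S - Cset \<sigma> ys)"
  using t'r unfolding roots_def by auto

lemma t'_notC: "z \<notin> Cset \<sigma> ys \<Longrightarrow> \<tau>' z \<notin> Cset \<sigma> ys"
  using permutes_in_image[OF t'perm, of z] permutes_not_in[OF t'perm, of z] by (cases "z \<in> S") auto

lemma t'_C: "z \<in> Cset \<sigma> ys \<Longrightarrow> \<tau>' z = z"
  using permutes_not_in[OF t'perm, of z] by simp

lemma phi_comm: "rho k l \<sigma> ys \<circ> \<tau>' = \<tau>' \<circ> rho k l \<sigma> ys"
proof
  fix z
  show "(rho k l \<sigma> ys \<circ> \<tau>') z = (\<tau>' \<circ> rho k l \<sigma> ys) z"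
  proof (cases "z \<in> Cset \<sigma> ys")
    case True
    then have "rho k l \<sigma> ys z \<in> Cset \<sigma> ys" using permutes_in_image[OF rho_permutes] by blast
    then show ?thesis using True t'_C by simp
  next
    case False
    then show ?thesis using t'_notC[OF False] rho_out[of z 1] rho_out[of "\<tau>' z" 1] by simp
  qed
qed

lemma phi_root: "rho k l \<sigma> ys \<circ> \<tau>' \<in> roots k S \<sigma>"
proof -
  have CS: "Cset \<sigma> ys \<subseteq> S" using Cset_facts(1)[OF ys] .
  have p1: "\<tau>' permutes S" using permutes_subset[OF t'perm] by blast
  have p2: "rho k l \<sigma> ys permutes S" using permutes_subset[OF rho_permutes CS] .
  have sp: "\<sigma> permutes S" using cr unfolding creg_def by simp
  have "((rho k l \<sigma> ys \<circ> \<tau>') ^^ k) z = \<sigma> z" for z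
  proof -
    have "((rho k l \<sigma> ys \<circ> \<tau>') ^^ k) z = (rho k l \<sigma> ys ^^ k) ((\<tau>' ^^ k) z)"
      using funpow_comp_commute[OF phi_comm, of k] by simp
    also have "\<dots> = \<sigma> z"
    proof (cases "z \<in> Cset \<sigma> ys")
      case True
      then show ?thesis using t'k rho_k by (simp add: perm_restrict_def)
    next
      case False
      show ?thesis
      proof (cases "z \<in> S")
        case True
        then have "\<sigma> z \<notin> Cset \<sigma> ys" using Cset_sigma_inv False by blast
        then show ?thesis using t'k True False rho_out by (simp add: perm_restrict_def)
      next
        case F2: False
        then show ?thesis using t'k False rho_out permutes_not_in[OF sp F2]
          by (simp add: perm_restrict_def)
      qed
    qed
    finally show ?thesis .
  qed
  then show ?thesis unfolding roots_def using permutes_compose[OF p1 p2] by auto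
qed

lemma phi_sign: "sign (rho k l \<sigma> ys \<circ> \<tau>') = (-1) ^ (mL - 1) * sign \<tau>'"
proof -
  have fin: "finite (S - Cset \<sigma> ys)" using cr unfolding creg_def by simp
  have "permutation \<tau>'" using t'perm fin permutation_permutes by blast
  then show ?thesis using sign_compose[OF _ \<open>permutation \<tau>'\<close>] rho_sign permutation_of_cycle
    unfolding rho_def by metis
qed

lemma phi_pow: "((rho k l \<sigma> ys \<circ> \<tau>') ^^ n) x0 = (rho k l \<sigma> ys ^^ n) x0"
proof (induction n)
  case (Suc n)
  have "(rho k l \<sigma> ys ^^ n) x0 \<in> Cset \<sigma> ys"
    using permutes_in_image[OF permutes_funpow[OF rho_permutes]] x0_C by blast
  then show ?case using Suc t'_C by simp
qed simp

lemma phi_gt: "gt \<sigma> x0 (rho k l \<sigma> ys \<circ> \<tau>') = gL"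
  unfolding gt_def
proof (rule Least_equality)
  show "0 < gL \<and> ((rho k l \<sigma> ys \<circ> \<tau>') ^^ gL) x0 \<in> orbit \<sigma> x0"
    using gpos phi_pow rho_x0_g by simp
next
  fix y assume y: "0 < y \<and> ((rho k l \<sigma> ys \<circ> \<tau>') ^^ y) x0 \<in> orbit \<sigma> x0"
  show "gL \<le> y"
  proof (rule ccontr)
    assume "\<not> gL \<le> y"
    then have yl: "y < gL" by simp
    have "ys ! y \<in> orbit \<sigma> x0" using y phi_pow rho_x0[OF yl] by simp
    then have "orbit \<sigma> (ys ! y) = orbit \<sigma> (ys ! 0)"
      using creg_orbit_same[OF cr] Seqs_facts(3)[OF ys] by simp
    then have "y = 0" using Seqs_facts(5)[OF ys yl gpos] by simp
    then show False using y by simp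
  qed
qed

lemma phi_ysof: "ysof \<sigma> x0 (rho k l \<sigma> ys \<circ> \<tau>') = ys"
  by (rule nth_equalityI) (simp_all add: ysof_def phi_gt phi_pow rho_x0)

lemma phi_restrict: "perm_restrict (rho k l \<sigma> ys \<circ> \<tau>') (S - Cset \<sigma> ys) = \<tau>'"
proof
  fix z
  show "perm_restrict (rho k l \<sigma> ys \<circ> \<tau>') (S - Cset \<sigma> ys) z = \<tau>' z"
  proof (cases "z \<in> S - Cset \<sigma> ys")
    case True
    then have "\<tau>' z \<in> S - Cset \<sigma> ys" using permutes_in_image[OF t'perm] by blast
    then show ?thesis using True rho_out[of "\<tau>' z" 1] by (simp add: perm_restrict_def)
  next
    case False
    then show ?thesis using permutes_not_in[OF t'perm False] by (auto simp: perm_restrict_def)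
  qed
qed

end

end

context
  fixes \<tau> assumes tr: "\<tau> \<in> roots k S \<sigma>"
begin

lemma tperm: "\<tau> permutes S" and tk: "\<tau> ^^ k = \<sigma>" using tr unfolding roots_def by auto

lemma tcomm: "\<tau> \<circ> \<sigma> = \<sigma> \<circ> \<tau>"
  using tk by (metis funpow.simps(2) funpow_Suc_right)

lemma tc: "(\<tau> ^^ a) ((\<sigma> ^^ b) z) = (\<sigma> ^^ b) ((\<tau> ^^ a) z)"
  by (rule funpow_commute_gen[OF tcomm])

lemma tS: "x \<in> S \<Longrightarrow> (\<tau> ^^ n) x \<in> S"
  using permutes_in_image[OF permutes_funpow[OF tperm]] by blast

lemma tinj: "(\<tau> ^^ n) a = (\<tau> ^^ n) b \<Longrightarrow> a = b"
  using permutes_inj[OF permutes_funpow[OF tperm]] by (meson injD)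

lemma gt_ex: "\<exists>gL. 0 < gL \<and> (\<tau> ^^ gL) x0 \<in> orbit \<sigma> x0"
  using kpos tk by (intro exI[of _ k]) (auto intro: orbit.base)

lemma gt_pos: "0 < gt \<sigma> x0 \<tau>" and gt_orb: "(\<tau> ^^ gt \<sigma> x0 \<tau>) x0 \<in> orbit \<sigma> x0"
  using LeastI_ex[OF gt_ex] unfolding gt_def by auto

lemma gt_min: "0 < r \<Longrightarrow> r < gt \<sigma> x0 \<tau> \<Longrightarrow> (\<tau> ^^ r) x0 \<notin> orbit \<sigma> x0"
  unfolding gt_def using not_less_Least by blast

lemma orb_back:
  assumes "r \<le> s" "(\<tau> ^^ s) x0 \<in> orbit \<sigma> ((\<tau> ^^ r) x0)"
  shows "(\<tau> ^^ (s - r)) x0 \<in> orbit \<sigma> x0"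
proof -
  obtain j where j: "(\<tau> ^^ s) x0 = (\<sigma> ^^ j) ((\<tau> ^^ r) x0)"
    using assms(2) creg_orbit[OF cr] by blast
  have "(\<tau> ^^ s) x0 = (\<tau> ^^ r) ((\<tau> ^^ (s - r)) x0)"
    using assms(1) by (metis funpow_add le_add_diff_inverse comp_apply)
  moreover have "(\<sigma> ^^ j) ((\<tau> ^^ r) x0) = (\<tau> ^^ r) ((\<sigma> ^^ j) x0)" using tc by simp
  ultimately have "(\<tau> ^^ (s - r)) x0 = (\<sigma> ^^ j) x0" using j tinj by metis
  then show ?thesis using creg_orbit[OF cr] by blast
qed

lemma ysof_len: "length (ysof \<sigma> x0 \<tau>) = gt \<sigma> x0 \<tau>" unfolding ysof_def by simp
lemma ysof_nth: "r < gt \<sigma> x0 \<tau> \<Longrightarrow> ysof \<sigma> x0 \<tau> ! r = (\<tau> ^^ r) x0" unfolding ysof_def by simp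

lemma ysof_Seqs: "ysof \<sigma> x0 \<tau> \<in> Seqs S \<sigma> x0"
proof -
  have ne: "ysof \<sigma> x0 \<tau> \<noteq> []" using gt_pos ysof_len by (metis length_0_conv less_irrefl)
  have hd: "hd (ysof \<sigma> x0 \<tau>) = x0" using ne gt_pos ysof_nth[of 0] by (simp add: hd_conv_nth)
  have st: "set (ysof \<sigma> x0 \<tau>) \<subseteq> S" unfolding ysof_def using tS x0S by auto
  have "distinct (map (orbit \<sigma>) (ysof \<sigma> x0 \<tau>))"
  proof (subst distinct_conv_nth, intro allI impI)
    fix i j assume ij: "i < length (map (orbit \<sigma>) (ysof \<sigma> x0 \<tau>))"
      "j < length (map (orbit \<sigma>) (ysof \<sigma> x0 \<tau>))" "i \<noteq> j"
    show "map (orbit \<sigma>) (ysof \<sigma> x0 \<tau>) ! i \<noteq> map (orbit \<sigma>) (ysof \<sigma> x0 \<tau>) ! j"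
    proof
      assume eq: "map (orbit \<sigma>) (ysof \<sigma> x0 \<tau>) ! i = map (orbit \<sigma>) (ysof \<sigma> x0 \<tau>) ! j"
      have il: "i < gt \<sigma> x0 \<tau>" "j < gt \<sigma> x0 \<tau>" using ij ysof_len by auto
      have oe: "orbit \<sigma> ((\<tau> ^^ i) x0) = orbit \<sigma> ((\<tau> ^^ j) x0)" using eq il by (simp add: ysof_nth ysof_len)
      have "\<exists>a b. a < b \<and> b < gt \<sigma> x0 \<tau> \<and> orbit \<sigma> ((\<tau> ^^ a) x0) = orbit \<sigma> ((\<tau> ^^ b) x0)"
        using ij(3) il oe by (metis linorder_neqE_nat)
      then obtain a b where ab: "a < b" "b < gt \<sigma> x0 \<tau>" "orbit \<sigma> ((\<tau> ^^ a) x0) = orbit \<sigma> ((\<tau> ^^ b) x0)"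
        by blast
      have "(\<tau> ^^ b) x0 \<in> orbit \<sigma> ((\<tau> ^^ a) x0)" using ab(3) creg_self_in[OF cr] by simp
      then have "(\<tau> ^^ (b - a)) x0 \<in> orbit \<sigma> x0" using orb_back ab(1) by simp
      then show False using gt_min[of "b - a"] ab by simp
    qed
  qed
  then show ?thesis unfolding Seqs_def using ne hd st by simp
qed

lemma gt_props:
  obtains v where "(\<tau> ^^ gt \<sigma> x0 \<tau>) x0 = (\<sigma> ^^ v) x0" "gt \<sigma> x0 \<tau> dvd k"
    "(k div gt \<sigma> x0 \<tau> * v) mod l = 1 mod l"
proof -
  let ?gL = "gt \<sigma> x0 \<tau>"
  obtain v where v: "(\<tau> ^^ ?gL) x0 = (\<sigma> ^^ v) x0" using gt_orb creg_orbit[OF cr] by blast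
  have pw: "(\<tau> ^^ (?gL * q)) x0 = (\<sigma> ^^ (v * q)) x0" for q
  proof (induction q)
    case (Suc q)
    have "(\<tau> ^^ (?gL * Suc q)) x0 = (\<tau> ^^ ?gL) ((\<tau> ^^ (?gL * q)) x0)"
      by (simp add: funpow_add)
    also have "\<dots> = (\<sigma> ^^ (v * q)) ((\<sigma> ^^ v) x0)" using Suc v tc by simp
    also have "\<dots> = (\<sigma> ^^ (v * q + v)) x0" by (simp add: funpow_add)
    also have "\<dots> = (\<sigma> ^^ (v * Suc q)) x0" by (simp add: add.commute)
    finally show ?case .
  qed simp
  define q r where "q = k div ?gL" and "r = k mod ?gL"
  have "(\<tau> ^^ k) x0 = (\<tau> ^^ (r + ?gL * q)) x0" unfolding q_def r_def by simp
  also have "\<dots> = (\<tau> ^^ r) ((\<sigma> ^^ (v * q)) x0)" using pw by (simp add: funpow_add)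
  also have "\<dots> = (\<sigma> ^^ (v * q)) ((\<tau> ^^ r) x0)" using tc by simp
  finally have kk: "\<sigma> x0 = (\<sigma> ^^ (v * q)) ((\<tau> ^^ r) x0)" using tk by simp
  have "orbit \<sigma> x0 = orbit \<sigma> ((\<tau> ^^ r) x0)"
    using creg_funpow_orbit[OF cr, of 1 x0] creg_funpow_orbit[OF cr, of "v * q" "(\<tau> ^^ r) x0"] kk
    by simp
  then have "(\<tau> ^^ r) x0 \<in> orbit \<sigma> x0" using creg_self_in[OF cr] by simp
  moreover have "r < ?gL" unfolding r_def using gt_pos by simp
  ultimately have r0: "r = 0" using gt_min[of r] by (cases "r = 0") auto
  then have dv: "?gL dvd k" unfolding r_def by (rule mod_0_imp_dvd)
  have "(\<sigma> ^^ (v * q)) x0 = (\<sigma> ^^ 1) x0" using kk r0 by simp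
  then have "(v * q) mod l = 1 mod l" using creg_eq_iff[OF cr x0S lpos] by blast
  then have "(k div ?gL * v) mod l = 1 mod l" unfolding q_def by (simp add: mult.commute)
  then show ?thesis using that v dv by blast
qed

lemma gt_G: "gt \<sigma> x0 \<tau> \<in> G_set k l"
proof -
  obtain v where "gt \<sigma> x0 \<tau> dvd k" "(k div gt \<sigma> x0 \<tau> * v) mod l = 1 mod l"
    using gt_props by metis
  then show ?thesis using G_iff[OF kpos gt_pos] by blast
qed

lemma ysof_G: "length (ysof \<sigma> x0 \<tau>) \<in> G_set k l" using gt_G ysof_len by simp

abbreviation "YL \<equiv> ysof \<sigma> x0 \<tau>"
abbreviation "CYL \<equiv> Cset \<sigma> (ysof \<sigma> x0 \<tau>)"

lemma tau_eq_rho: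
  assumes "z \<in> CYL" shows "\<tau> z = rho k l \<sigma> YL z"
proof -
  note YS = ysof_Seqs and YG = ysof_G
  let ?gL = "gt \<sigma> x0 \<tau>" and ?uL = "uinv k l (length YL)"
  obtain i where i: "i < l * length YL" "z = enum k l \<sigma> YL i" using Cset_enum[OF YS YG assms] by blast
  obtain v where v: "(\<tau> ^^ ?gL) x0 = (\<sigma> ^^ v) x0" "(k div ?gL * v) mod l = 1 mod l"
    using gt_props by metis
  have gp: "?gL > 0" using gt_pos .
  have uv: "?uL mod l = v mod l"
    using modinv_unique[OF uinv_prop[OF YG kpos] ] v(2) ysof_len by simp
  define r a where "r = i mod ?gL" and "a = i div ?gL * ?uL mod l"
  have rl: "r < ?gL" unfolding r_def using gp by simp
  have z: "z = (\<sigma> ^^ a) ((\<tau> ^^ r) x0)"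
    unfolding i(2) enum_def a_def r_def ysof_len using ysof_nth gp by simp
  have tz: "\<tau> z = (\<sigma> ^^ a) ((\<tau> ^^ Suc r) x0)"
    unfolding z using tc[of 1 a] by simp
  have rz: "rho k l \<sigma> YL z = enum k l \<sigma> YL (i + 1)"
    unfolding i(2) using rho_pow_enum[OF YS YG, of 1 i] by simp
  show ?thesis
  proof (cases "Suc r < ?gL")
    case True
    have "(i + 1) mod ?gL = Suc r" "(i + 1) div ?gL = i div ?gL"
      using True unfolding r_def by (simp_all add: mod_Suc div_Suc)
    then have "enum k l \<sigma> YL (i + 1) = (\<sigma> ^^ a) (YL ! Suc r)"
      unfolding enum_def a_def ysof_len by simp
    then show ?thesis using tz rz ysof_nth[OF True] by simp
  next
    case False
    then have sr: "Suc r = ?gL" using rl by simp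
    have "(i + 1) mod ?gL = 0" "(i + 1) div ?gL = Suc (i div ?gL)"
      using sr unfolding r_def by (simp_all add: mod_Suc div_Suc)
    then have e1: "enum k l \<sigma> YL (i + 1) = (\<sigma> ^^ (Suc (i div ?gL) * ?uL mod l)) x0"
      unfolding enum_def ysof_len using ysof_nth[OF gp] by simp
    have t1: "\<tau> z = (\<sigma> ^^ (a + v)) x0" using tz sr v(1) by (simp add: funpow_add)
    have "(a + v) mod l = (Suc (i div ?gL) * ?uL mod l) mod l"
    proof -
      have "(a + v) mod l = (i div ?gL * ?uL + v mod l) mod l" unfolding a_def by (simp add: mod_simps)
      also have "\<dots> = (i div ?gL * ?uL + ?uL mod l) mod l" using uv by simp
      also have "\<dots> = (Suc (i div ?gL) * ?uL) mod l" by (simp add: mod_simps algebra_simps)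
      finally show ?thesis by simp
    qed
    then have "(\<sigma> ^^ (a + v)) x0 = (\<sigma> ^^ (Suc (i div ?gL) * ?uL mod l)) x0"
      using creg_eq_iff[OF cr x0S lpos] by blast
    then show ?thesis using t1 e1 rz by simp
  qed
qed

lemma CY_sub: "CYL \<subseteq> S" using Cset_facts(1)[OF ysof_Seqs] .

lemma tau_img: "\<tau> ` CYL = CYL"
proof -
  have "\<tau> ` CYL = rho k l \<sigma> YL ` CYL" using tau_eq_rho by (auto simp: image_def)
  also have "\<dots> = CYL" using permutes_image[OF rho_permutes[OF ysof_Seqs ysof_G]] .
  finally show ?thesis .
qed

abbreviation "tauR \<equiv> perm_restrict \<tau> (S - CYL)"

lemma tauR_facts:
  "tauR permutes (S - CYL)"
  "\<And>z n. z \<in> S - CYL \<Longrightarrow> (tauR ^^ n) z = (\<tau> ^^ n) z"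
  "\<And>z. z \<in> S - CYL \<Longrightarrow> \<tau> z \<in> S - CYL"
  using restrict_permutes[OF tperm CY_sub tau_img] by auto

lemma tau_decomp: "\<tau> = rho k l \<sigma> YL \<circ> tauR"
proof
  fix z
  show "\<tau> z = (rho k l \<sigma> YL \<circ> tauR) z"
  proof (cases "z \<in> CYL")
    case True
    then show ?thesis using tau_eq_rho by (simp add: perm_restrict_def)
  next
    case False
    show ?thesis
    proof (cases "z \<in> S")
      case True
      then have "\<tau> z \<in> S - CYL" using tauR_facts(3) False by blast
      then show ?thesis using rho_out[OF ysof_Seqs ysof_G, of "\<tau> z" 1] True False
        by (simp add: perm_restrict_def)
    next
      case F2: False
      then show ?thesis using rho_out[OF ysof_Seqs ysof_G, of z 1] False permutes_not_in[OF tperm F2]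
        by (simp add: perm_restrict_def)
    qed
  qed
qed

lemma tauR_root: "tauR \<in> roots k (S - CYL) (perm_restrict \<sigma> (S - CYL))"
proof -
  have "(tauR ^^ k) z = perm_restrict \<sigma> (S - CYL) z" for z
  proof (cases "z \<in> S - CYL")
    case True
    then show ?thesis using tauR_facts(2)[OF True, of k] tk by (simp add: perm_restrict_def)
  next
    case False
    then show ?thesis using permutes_not_in[OF permutes_funpow[OF tauR_facts(1)] False, of k]
      by (auto simp: perm_restrict_def)
  qed
  then show ?thesis unfolding roots_def using tauR_facts(1) by auto
qed


end


lemma roots_finite: "finite T \<Longrightarrow> finite (roots k T f)"
  unfolding roots_def by (rule finite_subset[OF _ finite_permutations]) auto

lemma Seqs_finite: "finite (Seqs S \<sigma> x0)"
proof -
  have fS: "finite S" using cr unfolding creg_def by simp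
  have "Seqs S \<sigma> x0 \<subseteq> {xs. set xs \<subseteq> S \<and> length xs \<le> card S}"
  proof
    fix ys assume ys: "ys \<in> Seqs S \<sigma> x0"
    have "length ys = card (set ys)" using Seqs_facts(1)[OF ys] by (simp add: distinct_card)
    also have "\<dots> \<le> card S" using Seqs_facts(2)[OF ys] fS by (simp add: card_mono)
    finally show "ys \<in> {xs. set xs \<subseteq> S \<and> length xs \<le> card S}" using Seqs_facts(2)[OF ys] by simp
  qed
  then show ?thesis using finite_lists_length_le[OF fS] finite_subset by blast
qed

abbreviation "SGL \<equiv> Seqs S \<sigma> x0 \<inter> {ys. length ys \<in> G_set k l}"
abbreviation "RRL ys \<equiv> roots k (S - Cset \<sigma> ys) (perm_restrict \<sigma> (S - Cset \<sigma> ys))"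

lemma roots_bij:
  "bij_betw (\<lambda>p. rho k l \<sigma> (fst p) \<circ> snd p) (Sigma SGL RRL) (roots k S \<sigma>)"
proof (rule bij_betw_byWitness[where f' = "\<lambda>\<tau>. (ysof \<sigma> x0 \<tau>, perm_restrict \<tau> (S - Cset \<sigma> (ysof \<sigma> x0 \<tau>)))"])
  show "\<forall>a\<in>Sigma SGL RRL. (ysof \<sigma> x0 (rho k l \<sigma> (fst a) \<circ> snd a),
      perm_restrict (rho k l \<sigma> (fst a) \<circ> snd a) (S - Cset \<sigma> (ysof \<sigma> x0 (rho k l \<sigma> (fst a) \<circ> snd a)))) = a"
    using phi_ysof phi_restrict by auto
  show "\<forall>a'\<in>roots k S \<sigma>. rho k l \<sigma> (fst (ysof \<sigma> x0 a', perm_restrict a' (S - Cset \<sigma> (ysof \<sigma> x0 a'))))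
      \<circ> snd (ysof \<sigma> x0 a', perm_restrict a' (S - Cset \<sigma> (ysof \<sigma> x0 a'))) = a'"
    using tau_decomp by auto
  show "(\<lambda>p. rho k l \<sigma> (fst p) \<circ> snd p) ` Sigma SGL RRL \<subseteq> roots k S \<sigma>"
    using phi_root by auto
  show "(\<lambda>\<tau>. (ysof \<sigma> x0 \<tau>, perm_restrict \<tau> (S - Cset \<sigma> (ysof \<sigma> x0 \<tau>)))) ` roots k S \<sigma> \<subseteq> Sigma SGL RRL"
    using ysof_Seqs ysof_G tauR_root by auto
qed

lemma roots_signed_sum:
  "(\<Sum>\<tau>\<in>roots k S \<sigma>. real_of_int (sign \<tau>)) =
   (\<Sum>ys\<in>SGL. (-1) ^ (l * length ys - 1) * (\<Sum>\<tau>'\<in>RRL ys. real_of_int (sign \<tau>')))"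
proof -
  have fS: "finite S" using cr unfolding creg_def by simp
  have "(\<Sum>\<tau>\<in>roots k S \<sigma>. real_of_int (sign \<tau>)) =
        (\<Sum>p\<in>Sigma SGL RRL. real_of_int (sign (rho k l \<sigma> (fst p) \<circ> snd p)))"
    using sum.reindex_bij_betw[OF roots_bij, of "\<lambda>\<tau>. real_of_int (sign \<tau>)"] by simp
  also have "\<dots> = (\<Sum>ys\<in>SGL. \<Sum>\<tau>'\<in>RRL ys. real_of_int (sign (rho k l \<sigma> ys \<circ> \<tau>')))"
    by (rule sum.Sigma[symmetric, unfolded split_beta])
       (use Seqs_finite roots_finite fS in auto)
  also have "\<dots> = (\<Sum>ys\<in>SGL. \<Sum>\<tau>'\<in>RRL ys. (-1) ^ (l * length ys - 1) * real_of_int (sign \<tau>'))"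
    by (intro sum.cong refl) (simp add: phi_sign)
  also have "\<dots> = (\<Sum>ys\<in>SGL. (-1) ^ (l * length ys - 1) * (\<Sum>\<tau>'\<in>RRL ys. real_of_int (sign \<tau>')))"
    by (simp add: sum_distrib_left)
  finally show ?thesis .
qed

abbreviation "SqL j \<equiv> {ys \<in> Seqs S \<sigma> x0. length ys = Suc j}"

lemma Sq0: "SqL 0 = {[x0]}"
proof -
  have "ys \<in> SqL 0 \<longleftrightarrow> ys = [x0]" for ys
  proof
    assume "ys \<in> SqL 0" then show "ys = [x0]" unfolding Seqs_def by (cases ys) auto
  next
    assume "ys = [x0]" then show "ys \<in> SqL 0" unfolding Seqs_def using x0S by simp
  qed
  then show ?thesis by blast
qed

lemma Sq_Suc: "SqL (Suc j) = (\<lambda>p. fst p @ [snd p]) ` Sigma (SqL j) (\<lambda>ys. S - Cset \<sigma> ys)"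
proof (intro set_eqI iffI)
  fix ws assume ws: "ws \<in> SqL (Suc j)"
  define ys z where "ys = butlast ws" and "z = last ws"
  have wne: "ws \<noteq> []" using ws by auto
  have wsd: "ws = ys @ [z]" unfolding ys_def z_def using wne by simp
  have lys: "length ys = Suc j" using ws unfolding ys_def by simp
  have d: "distinct (map (orbit \<sigma>) ys @ [orbit \<sigma> z])" and hw: "hd ws = x0" and sw: "set ws \<subseteq> S"
    using ws wsd unfolding Seqs_def by auto
  have "ys \<in> SqL j"
    unfolding Seqs_def using lys d hw sw wsd by (cases ys) auto
  moreover have "z \<in> S - Cset \<sigma> ys"
  proof -
    have zS: "z \<in> S" using sw wsd by simp
    have "z \<notin> Cset \<sigma> ys"
    proof
      assume "z \<in> Cset \<sigma> ys"
      then obtain y where "y \<in> set ys" "z \<in> orbit \<sigma> y" unfolding Cset_def by blast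
      then have "orbit \<sigma> z \<in> set (map (orbit \<sigma>) ys)" using creg_orbit_same[OF cr] by auto
      then show False using d by simp
    qed
    then show ?thesis using zS by simp
  qed
  ultimately show "ws \<in> (\<lambda>p. fst p @ [snd p]) ` Sigma (SqL j) (\<lambda>ys. S - Cset \<sigma> ys)"
    using wsd by force
next
  fix ws assume "ws \<in> (\<lambda>p. fst p @ [snd p]) ` Sigma (SqL j) (\<lambda>ys. S - Cset \<sigma> ys)"
  then obtain ys z where ys: "ys \<in> SqL j" and z: "z \<in> S - Cset \<sigma> ys" and wsd: "ws = ys @ [z]" by auto
  have "orbit \<sigma> z \<notin> set (map (orbit \<sigma>) ys)"
  proof
    assume "orbit \<sigma> z \<in> set (map (orbit \<sigma>) ys)"
    then obtain y where "y \<in> set ys" "orbit \<sigma> z = orbit \<sigma> y" by auto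
    then have "z \<in> Cset \<sigma> ys" unfolding Cset_def using creg_self_in[OF cr, of z] by auto
    then show False using z by simp
  qed
  then show "ws \<in> SqL (Suc j)" using ys z wsd unfolding Seqs_def by (cases ys) auto
qed

lemma Sq_card:
  assumes cS: "card S = l * c" and jc: "Suc j \<le> c"
  shows "card (SqL j) * fact (c - Suc j) = l ^ j * fact (c - 1)"
  using jc
proof (induction j)
  case 0
  then show ?case using Sq0 by simp
next
  case (Suc j)
  have fS: "finite S" using cr unfolding creg_def by simp
  have fin: "finite (SqL j)" using Seqs_finite by simp
  have cd: "card (S - Cset \<sigma> ys) = l * (c - Suc j)" if "ys \<in> SqL j" for ys
  proof -
    have "card (S - Cset \<sigma> ys) = card S - card (Cset \<sigma> ys)"
      using Cset_facts[of ys] that by (simp add: card_Diff_subset)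
    also have "\<dots> = l * c - l * Suc j" using Cset_facts(3)[of ys] that cS by simp
    finally show ?thesis by (simp add: diff_mult_distrib2)
  qed
  have "card (SqL (Suc j)) = card (Sigma (SqL j) (\<lambda>ys. S - Cset \<sigma> ys))"
    unfolding Sq_Suc by (rule card_image) (auto simp: inj_on_def)
  also have "\<dots> = (\<Sum>ys\<in>SqL j. card (S - Cset \<sigma> ys))"
    using fin fS by (simp add: card_SigmaI)
  also have "\<dots> = card (SqL j) * (l * (c - Suc j))" using cd by simp
  finally have e: "card (SqL (Suc j)) = card (SqL j) * (l * (c - Suc j))" .
  define d where "d = c - Suc (Suc j)"
  have "c - Suc j = Suc d" using Suc.prems unfolding d_def by simp
  then have "(fact (c - Suc j) :: nat) = (c - Suc j) * fact (c - Suc (Suc j))"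
    unfolding d_def[symmetric] by simp
  then have "card (SqL (Suc j)) * fact (c - Suc (Suc j)) = l * (card (SqL j) * fact (c - Suc j))"
    unfolding e by (simp add: algebra_simps)
  also have "\<dots> = l ^ Suc j * fact (c - 1)" using Suc by simp
  finally show ?case .
qed

lemma restr_creg:
  assumes ys: "ys \<in> SGL" and cS: "card S = l * c"
  shows "creg l (S - Cset \<sigma> ys) (perm_restrict \<sigma> (S - Cset \<sigma> ys))"
    "card (S - Cset \<sigma> ys) = l * (c - length ys)"
proof -
  have y1: "ys \<in> Seqs S \<sigma> x0" and y2: "length ys \<in> G_set k l" using ys by auto
  have sp: "\<sigma> permutes S" and fS: "finite S" using cr unfolding creg_def by auto
  note rp = restrict_permutes[OF sp Cset_facts(1)[OF y1] sigma_Cset_img[OF y1 y2]]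
  have "orbit (perm_restrict \<sigma> (S - Cset \<sigma> ys)) x = orbit \<sigma> x" if "x \<in> S - Cset \<sigma> ys" for x
  proof (rule orbit_cong0[OF that])
    show "perm_restrict \<sigma> (S - Cset \<sigma> ys) \<in> S - Cset \<sigma> ys \<rightarrow> S - Cset \<sigma> ys"
      using rp(3) unfolding perm_restrict_def by (intro funcsetI) simp
  qed (simp add: perm_restrict_def)
  note oc = this
  show "creg l (S - Cset \<sigma> ys) (perm_restrict \<sigma> (S - Cset \<sigma> ys))"
    unfolding creg_def
  proof (intro conjI ballI)
    show "perm_restrict \<sigma> (S - Cset \<sigma> ys) permutes (S - Cset \<sigma> ys)" by (rule rp(1))
    show "finite (S - Cset \<sigma> ys)" using fS by simp
    fix x assume x: "x \<in> S - Cset \<sigma> ys"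
    have "card (orbit \<sigma> x) = l" using cr x unfolding creg_def by simp
    then show "card (orbit (perm_restrict \<sigma> (S - Cset \<sigma> ys)) x) = l" using oc[OF x] by simp
  qed
  have "card (S - Cset \<sigma> ys) = card S - card (Cset \<sigma> ys)"
    using Cset_facts[OF y1] by (simp add: card_Diff_subset)
  then show "card (S - Cset \<sigma> ys) = l * (c - length ys)"
    using Cset_facts(3)[OF y1] cS by (simp add: diff_mult_distrib2)
qed
end



unbundle fps_syntax

definition Fser :: "nat \<Rightarrow> nat \<Rightarrow> real fps" where
  "Fser k l = Abs_fps (\<lambda>g. if g \<in> G_set k l
                       then (-1) ^ (l * g + 1) * of_nat l ^ (g - 1) / of_nat g else 0)"

definition wt :: "nat \<Rightarrow> nat \<Rightarrow> nat \<Rightarrow> real" where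
  "wt k l g = (if g \<in> G_set k l then (-1) ^ (l * g + 1) * of_nat l ^ (g - 1) else 0)"

lemma fps_rec:
  assumes "k > 0"
  shows "of_nat (Suc n) * (fps_exp 1 oo Fser k l) $ Suc n =
     (\<Sum>g=1..Suc n. wt k l g * (fps_exp 1 oo Fser k l) $ (Suc n - g))"
proof -
  define F where "F = Fser k l"
  define E where "E = fps_exp (1::real) oo F"
  have "0 \<notin> G_set k l" using assms unfolding G_set_def by simp
  then have F0: "F $ 0 = 0" unfolding F_def Fser_def by simp
  have D: "fps_deriv E = E * fps_deriv F"
    unfolding E_def using fps_compose_deriv[OF F0, of "fps_exp 1"] by (simp add: mult.commute)
  have "of_nat (Suc n) * E $ Suc n = (fps_deriv E) $ n" by simp
  also have "\<dots> = (\<Sum>i=0..n. E $ i * (of_nat (n - i + 1) * F $ (n - i + 1)))"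
    unfolding D fps_mult_nth by simp
  also have "\<dots> = (\<Sum>i=0..n. E $ i * (of_nat (Suc n - i) * F $ (Suc n - i)))"
    by (intro sum.cong refl) (simp add: Suc_diff_le)
  also have "\<dots> = (\<Sum>g=1..Suc n. E $ (Suc n - g) * (of_nat g * F $ g))"
    by (rule sum.reindex_bij_witness[where i="\<lambda>g. Suc n - g" and j="\<lambda>i. Suc n - i"]) auto
  also have "\<dots> = (\<Sum>g=1..Suc n. wt k l g * E $ (Suc n - g))"
    by (intro sum.cong refl) (auto simp: F_def Fser_def wt_def)
  finally show ?thesis unfolding E_def F_def .
qed


lemma main_count:
  fixes S :: "'a set" and \<sigma> :: "'a \<Rightarrow> 'a"
  assumes kpos: "k > 0" and lpos: "l > 0"
  shows "creg l S \<sigma> \<Longrightarrow> card S = l * c \<Longrightarrow>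
    (\<Sum>\<tau>\<in>roots k S \<sigma>. real_of_int (sign \<tau>)) = fact c * (fps_exp 1 oo Fser k l) $ c"
proof (induction c arbitrary: S \<sigma> rule: less_induct)
  case (less c)
  note cr = less.prems(1) and cS = less.prems(2)
  have fS: "finite S" and sp: "\<sigma> permutes S" using cr unfolding creg_def by auto
  show ?case
  proof (cases "c = 0")
    case True
    then have S0: "S = {}" using cS fS by simp
    then have sid: "\<sigma> = id" using sp by (simp add: permutes_empty)
    have "roots k S \<sigma> = {id}" unfolding roots_def S0 sid by (auto simp: permutes_empty)
    then show ?thesis using True by simp
  next
    case False
    then obtain n where cn: "c = Suc n" by (cases c) auto
    have "S \<noteq> {}" using cS lpos False fS by auto
    then obtain x0 where x0S: "x0 \<in> S" by blast
    define E where "E = fps_exp (1::real) oo Fser k l"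
    define SG where "SG = Seqs S \<sigma> x0 \<inter> {ys. length ys \<in> G_set k l}"
    define H where "H g = (-1) ^ (l * g - 1) * (fact (c - g) * E $ (c - g))" for g
    have SGlen: "length ys \<in> {1..c}" if "ys \<in> SG" for ys
    proof -
      have y1: "ys \<in> Seqs S \<sigma> x0" using that unfolding SG_def by simp
      have "l * length ys \<le> l * c"
        using Cset_facts(3)[OF kpos lpos cr x0S y1] card_mono[OF fS Cset_facts(1)[OF kpos lpos cr x0S y1]] cS
        by simp
      moreover have "0 < length ys" using Seqs_facts(4)[OF kpos lpos cr x0S y1] .
      ultimately show ?thesis using lpos by (simp add: Suc_le_eq)
    qed
    have "(\<Sum>\<tau>\<in>roots k S \<sigma>. real_of_int (sign \<tau>)) =
      (\<Sum>ys\<in>SG. (-1) ^ (l * length ys - 1) *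
          (\<Sum>\<tau>'\<in>roots k (S - Cset \<sigma> ys) (perm_restrict \<sigma> (S - Cset \<sigma> ys)). real_of_int (sign \<tau>')))"
      unfolding SG_def by (rule roots_signed_sum[OF kpos lpos cr x0S])
    also have "\<dots> = (\<Sum>ys\<in>SG. H (length ys))"
    proof (intro sum.cong refl)
      fix ys assume ys: "ys \<in> SG"
      have lp: "length ys > 0" "length ys \<le> c" using SGlen[OF ys] by auto
      have lt: "c - length ys < c" using diff_less[OF lp(1), of c] cn by simp
      have ysG: "ys \<in> Seqs S \<sigma> x0 \<inter> {ys. length ys \<in> G_set k l}" using ys unfolding SG_def .
      have "(\<Sum>\<tau>'\<in>roots k (S - Cset \<sigma> ys) (perm_restrict \<sigma> (S - Cset \<sigma> ys)). real_of_int (sign \<tau>'))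
            = fact (c - length ys) * E $ (c - length ys)"
        unfolding E_def
        by (rule less.IH[of "c - length ys"])
           (use lt restr_creg[OF kpos lpos cr x0S ysG cS] in \<open>simp_all\<close>)
      then show "(-1) ^ (l * length ys - 1) *
          (\<Sum>\<tau>'\<in>roots k (S - Cset \<sigma> ys) (perm_restrict \<sigma> (S - Cset \<sigma> ys)). real_of_int (sign \<tau>'))
          = H (length ys)" unfolding H_def by simp
    qed
    also have "\<dots> = (\<Sum>g\<in>{1..c}. \<Sum>ys\<in>{ys\<in>SG. length ys = g}. H (length ys))"
      by (rule sum.group[symmetric]) (use Seqs_finite[OF kpos lpos cr x0S] SGlen in \<open>auto simp: SG_def\<close>)
    also have "\<dots> = (\<Sum>g\<in>{1..c}. fact (c - 1) * (wt k l g * E $ (c - g)))"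
    proof (intro sum.cong refl)
      fix g assume g: "g \<in> {1..c}"
      have "(\<Sum>ys\<in>{ys\<in>SG. length ys = g}. H (length ys)) = of_nat (card {ys\<in>SG. length ys = g}) * H g"
        by simp
      also have "\<dots> = fact (c - 1) * (wt k l g * E $ (c - g))"
      proof (cases "g \<in> G_set k l")
        case True
        have eqs: "{ys\<in>SG. length ys = g} = {ys \<in> Seqs S \<sigma> x0. length ys = Suc (g - 1)}"
          using g True unfolding SG_def by auto
        have cc: "card {ys \<in> Seqs S \<sigma> x0. length ys = Suc (g - 1)} * fact (c - Suc (g - 1)) = l ^ (g - 1) * fact (c - 1)"
          by (rule Sq_card[OF kpos lpos cr x0S cS]) (use g in auto)
        have cc': "real (card {ys \<in> Seqs S \<sigma> x0. length ys = Suc (g - 1)}) * fact (c - g) = real l ^ (g - 1) * fact (c - 1)"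
          using arg_cong[OF cc, of real] g by simp
        have sg: "(-1::real) ^ (l * g - 1) = (-1) ^ (l * g + 1)"
        proof -
          have "l * g \<ge> 1" using lpos g by simp
          then obtain d where d: "l * g = Suc d" using Suc_le_D[of 0 "l * g"] by auto
          show ?thesis unfolding d by simp
        qed
        show ?thesis unfolding eqs H_def wt_def using True cc' sg by (simp add: algebra_simps)
      next
        case False
        then have e: "{ys\<in>SG. length ys = g} = {}" unfolding SG_def by auto
        show ?thesis unfolding e using False by (simp add: wt_def)
      qed
      finally show "(\<Sum>ys\<in>{ys\<in>SG. length ys = g}. H (length ys)) = fact (c - 1) * (wt k l g * E $ (c - g))" .
    qed
    also have "\<dots> = fact (c - 1) * (\<Sum>g=1..c. wt k l g * E $ (c - g))"
      by (simp add: sum_distrib_left)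
    also have "\<dots> = fact n * (of_nat (Suc n) * E $ Suc n)"
      unfolding cn E_def using fps_rec[OF kpos, of n l] by simp
    also have "\<dots> = fact c * E $ c" unfolding cn by (simp add: algebra_simps)
    finally show ?thesis unfolding E_def .
  qed
qed

lemma re_ro_sum:
  assumes "finite S"
  shows "real (re_roots k S \<sigma>) - real (ro_roots k S \<sigma>) = (\<Sum>\<tau>\<in>roots k S \<sigma>. real_of_int (sign \<tau>))"
proof -
  let ?A = "{\<tau>. \<tau> permutes S \<and> \<tau> ^^ k = \<sigma> \<and> evenperm \<tau>}"
  let ?B = "{\<tau>. \<tau> permutes S \<and> \<tau> ^^ k = \<sigma> \<and> \<not> evenperm \<tau>}"
  have fin: "finite (roots k S \<sigma>)" unfolding roots_def
    by (rule finite_subset[OF _ finite_permutations[OF assms]]) auto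
  have R: "roots k S \<sigma> = ?A \<union> ?B" unfolding roots_def by auto
  have fA: "finite ?A" and fB: "finite ?B" using fin R by auto
  have "(\<Sum>\<tau>\<in>roots k S \<sigma>. real_of_int (sign \<tau>)) = (\<Sum>\<tau>\<in>?A. real_of_int (sign \<tau>)) + (\<Sum>\<tau>\<in>?B. real_of_int (sign \<tau>))"
    unfolding R by (rule sum.union_disjoint[OF fA fB]) auto
  also have "(\<Sum>\<tau>\<in>?A. real_of_int (sign \<tau>)) = (\<Sum>\<tau>\<in>?A. 1)" by (intro sum.cong refl) (simp add: sign_def)
  also have "(\<Sum>\<tau>\<in>?B. real_of_int (sign \<tau>)) = (\<Sum>\<tau>\<in>?B. -1)" by (intro sum.cong refl) (simp add: sign_def)
  finally show ?thesis unfolding re_roots_def ro_roots_def by simp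
qed

theorem lemma2:
  fixes k l :: nat and \<sigma> :: "nat \<Rightarrow> nat \<Rightarrow> nat"
  assumes "k > 0" and "l > 0"
    and "\<And>c. has_cycle_type l c {0..<l * c} (\<sigma> c)"
  shows "Abs_fps (\<lambda>c. (of_nat (re_roots k {0..<l * c} (\<sigma> c))
                        - of_nat (ro_roots k {0..<l * c} (\<sigma> c))) / fact c)
       = fps_exp (1::real) oo
         Abs_fps (\<lambda>g. if g \<in> G_set k l
                       then (-1) ^ (l * g + 1) * of_nat l ^ (g - 1) / of_nat g else 0)"
proof (rule fps_ext)
  fix c
  have h: "creg l {0..<l * c} (\<sigma> c)" "card {0..<l * c} = l * c"
    using assms(3)[of c] unfolding has_cycle_type_def creg_def by auto
  have "real (re_roots k {0..<l * c} (\<sigma> c)) - real (ro_roots k {0..<l * c} (\<sigma> c))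
        = fact c * (fps_exp 1 oo Fser k l) $ c"
    using re_ro_sum[of "{0..<l * c}" k "\<sigma> c"] main_count[OF assms(1,2) h] by simp
  then show "Abs_fps (\<lambda>c. (of_nat (re_roots k {0..<l * c} (\<sigma> c))
                        - of_nat (ro_roots k {0..<l * c} (\<sigma> c))) / fact c) $ c
       = (fps_exp (1::real) oo
         Abs_fps (\<lambda>g. if g \<in> G_set k l
                       then (-1) ^ (l * g + 1) * of_nat l ^ (g - 1) / of_nat g else 0)) $ c"
    unfolding Fser_def by (simp add: field_simps)
qed

end
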